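(* Let $E$ be a finite directed graph with $|E^1|=n\ge1$. Then $\mathrm{h}_{\mathrm{alg}}(L_K(E))\le\log(2n)$.
   Context: For a finite directed graph $E=(E^0,E^1,s,r)$, the Leavitt path algebra $L_K(E)$ over a field $K$ is generated by $E^0\cup E^1\cup\{e^*:e\in E^1\}$ subject to: $vw=\delta_{v,w}v$ for vertices; $s(e)e=e=er(e)$, $r(e)e^*=e^*=e^*s(e)$; $e^*f=\delta_{e,f}r(e)$; $\sum_{s(e)=v}ee^*=v$ for each vertex $v$ with $0<|s^{-1}(v)|<\infty$. Its standard filtration $W_m$ is the span of $\lambda\mu^*$ with $\lambda,\mu$ paths and $l(\lambda)+l(\mu)\le m$. $\mathrm{h}_{\mathrm{alg}}(L_K(E))=0$ if $L_K(E)$ is finite-dimensional and otherwise $\limsup_m\frac1m\log\dim(W_m/W_{m-1})$. *)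

theory Defs
  imports Complex_Main "HOL-Library.Liminf_Limsup" "HOL-Library.Extended_Real"
    "Graph_Theory.Digraph" "Graph_Theory.Arc_Walk"
begin

text \<open>Generators of the free algebra: vertices v, edges e, ghost edges e*.\<close>
datatype ('v,'e) lgen = V 'v | Ed 'e | Gh 'e

definition lgens :: "('v,'e) pre_digraph \<Rightarrow> ('v,'e) lgen set" where
  "lgens G = V ` verts G \<union> Ed ` arcs G \<union> Gh ` arcs G"

text \<open>Elements of the free algebra K<X>: coefficient functions on words (only finitely
  supported ones arise below). Monomials and the (convolution) product.\<close>
definition mon :: "'g list \<Rightarrow> 'g list \<Rightarrow> 'k::field" where
  "mon w = (\<lambda>u. if u = w then 1 else 0)"

definition fmul :: "('g list \<Rightarrow> 'k::field) \<Rightarrow> ('g list \<Rightarrow> 'k) \<Rightarrow> 'g list \<Rightarrow> 'k" where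
  "fmul f g = (\<lambda>w. \<Sum>i\<le>length w. f (take i w) * g (drop i w))"

definition fsub :: "('g list \<Rightarrow> 'k::field) \<Rightarrow> ('g list \<Rightarrow> 'k) \<Rightarrow> 'g list \<Rightarrow> 'k" where
  "fsub f g = (\<lambda>w. f w - g w)"

text \<open>The defining relations of L_K(E) (each written as r, meaning r = 0).
  Edges go from s(e) = tail G e to r(e) = head G e.\<close>
definition lrels :: "('v,'e) pre_digraph \<Rightarrow> (('v,'e) lgen list \<Rightarrow> 'k::field) set" where
  "lrels G =
     {fsub (mon [V v, V w]) (if v = w then mon [V v] else (\<lambda>_. 0)) | v w. v \<in> verts G \<and> w \<in> verts G}
   \<union> {fsub (mon [V (tail G e), Ed e]) (mon [Ed e]) | e. e \<in> arcs G}
   \<union> {fsub (mon [Ed e, V (head G e)]) (mon [Ed e]) | e. e \<in> arcs G}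
   \<union> {fsub (mon [V (head G e), Gh e]) (mon [Gh e]) | e. e \<in> arcs G}
   \<union> {fsub (mon [Gh e, V (tail G e)]) (mon [Gh e]) | e. e \<in> arcs G}
   \<union> {fsub (mon [Gh e, Ed f]) (if e = f then mon [V (head G e)] else (\<lambda>_. 0)) | e f. e \<in> arcs G \<and> f \<in> arcs G}
   \<union> {fsub (\<lambda>w. \<Sum>e\<in>out_arcs G v. mon [Ed e, Gh e] w) (mon [V v]) | v.
        v \<in> verts G \<and> out_arcs G v \<noteq> {} \<and> finite (out_arcs G v)}"

inductive_set lideal :: "('v,'e) pre_digraph \<Rightarrow> (('v,'e) lgen list \<Rightarrow> 'k::field) set"
  for G :: "('v,'e) pre_digraph" where
  zero: "(\<lambda>_. 0) \<in> lideal G"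
| add: "a \<in> lideal G \<Longrightarrow> b \<in> lideal G \<Longrightarrow> (\<lambda>w. a w + b w) \<in> lideal G"
| smult: "a \<in> lideal G \<Longrightarrow> (\<lambda>w. c * a w) \<in> lideal G"
| gen: "r \<in> lrels G \<Longrightarrow> u \<in> lists (lgens G) \<Longrightarrow> v \<in> lists (lgens G) \<Longrightarrow>
        fmul (fmul (mon u) r) (mon v) \<in> lideal G"

text \<open>A path is a pair (u, p): start vertex u and arc list p forming a walk in G
  (length 0 paths are the vertices).\<close>
definition is_path :: "('v,'e) pre_digraph \<Rightarrow> 'v \<times> 'e list \<Rightarrow> bool" where
  "is_path G p = (\<exists>w. pre_digraph.awalk G (fst p) (snd p) w)"

definition pword :: "'v \<times> 'e list \<Rightarrow> ('v,'e) lgen list" where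
  "pword p = (if snd p = [] then [V (fst p)] else map Ed (snd p))"

definition gword :: "'v \<times> 'e list \<Rightarrow> ('v,'e) lgen list" where
  "gword q = (if snd q = [] then [V (fst q)] else map Gh (rev (snd q)))"

definition lmstar :: "('v \<times> 'e list) \<times> ('v \<times> 'e list) \<Rightarrow> ('v,'e) lgen list \<Rightarrow> 'k::field" where
  "lmstar x = mon (pword (fst x) @ gword (snd x))"

text \<open>Index set for the spanning set of W_m.\<close>
definition PP :: "('v,'e) pre_digraph \<Rightarrow> nat \<Rightarrow> (('v \<times> 'e list) \<times> ('v \<times> 'e list)) set" where
  "PP G m = {(p, q). is_path G p \<and> is_path G q \<and> length (snd p) + length (snd q) \<le> m}"

text \<open>The images in L_K(E) of the lambda mu*, x in S, are linearly independent modulo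
  the span of the images of the lambda mu*, y in T.\<close>
definition indep_mod :: "('v,'e) pre_digraph \<Rightarrow> 'k::field itself \<Rightarrow>
    (('v \<times> 'e list) \<times> ('v \<times> 'e list)) set \<Rightarrow> (('v \<times> 'e list) \<times> ('v \<times> 'e list)) set \<Rightarrow> bool" where
  "indep_mod G K S T = (finite S \<and> (\<forall>(c :: _ \<Rightarrow> 'k) (d :: _ \<Rightarrow> 'k) T'. finite T' \<and> T' \<subseteq> T \<longrightarrow>
      (\<lambda>w. (\<Sum>x\<in>S. c x * lmstar x w) + (\<Sum>y\<in>T'. d y * lmstar y w)) \<in> lideal G \<longrightarrow>
      (\<forall>x\<in>S. c x = 0)))"

text \<open>dim_K (W_m / W_{m-1}), with W_{-1} = 0.\<close>
definition grdim :: "('v,'e) pre_digraph \<Rightarrow> 'k::field itself \<Rightarrow> nat \<Rightarrow> nat" where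
  "grdim G K m = Max {card S | S. S \<subseteq> PP G m \<and>
      indep_mod G K S (if m = 0 then {} else PP G (m - 1))}"

definition lpa_fin_dim :: "('v,'e) pre_digraph \<Rightarrow> 'k::field itself \<Rightarrow> bool" where
  "lpa_fin_dim G K = (\<exists>B :: (('v,'e) lgen list \<Rightarrow> 'k) set. finite B \<and>
      (\<forall>w \<in> lists (lgens G). w \<noteq> [] \<longrightarrow>
         (\<exists>a c. a \<in> lideal G \<and> mon w = (\<lambda>u. a u + (\<Sum>b\<in>B. c b * b u)))))"

text \<open>Algebraic entropy; log 0 is read as -infinity.\<close>
definition h_alg :: "('v,'e) pre_digraph \<Rightarrow> 'k::field itself \<Rightarrow> ereal" where
  "h_alg G K = (if lpa_fin_dim G K then 0 else
     limsup (\<lambda>m. if grdim G K m = 0 then -\<infinity> else ereal (ln (real (grdim G K m)) / real m)))"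

end

theory Submission
  imports Defs
begin

lemma ev_pow2:
  fixes c :: real
  shows "eventually (\<lambda>m::nat. c * (real m + 1) ^ 2 \<le> 2 ^ m) at_top"
proof -
  have "(\<lambda>m. real m / sqrt 2 ^ m) \<longlonglongrightarrow> 0"
    using lim_n_over_pown[of "sqrt 2 :: real"] by simp
  hence "(\<lambda>m. (4 * \<bar>c\<bar>) * (real m / sqrt 2 ^ m)^2) \<longlonglongrightarrow> (4 * \<bar>c\<bar>) * 0^2"
    by (intro tendsto_intros)
  hence "eventually (\<lambda>m. (4 * \<bar>c\<bar>) * (real m / sqrt 2 ^ m)^2 < 1) at_top"
    by (intro order_tendstoD) auto
  thus ?thesis using eventually_gt_at_top[of 0]
  proof eventually_elim
    case (elim m)
    have s: "(sqrt 2 ^ m)^2 = (2::real) ^ m"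
      by (simp flip: power_mult add: power_mult[symmetric] mult.commute[of m] power_mult)
    have p: "(0::real) < 2 ^ m" by simp
    have "(4 * \<bar>c\<bar>) * (real m)^2 / 2^m < 1" using elim(1) by (simp add: power_divide s)
    hence a: "(4 * \<bar>c\<bar>) * (real m)^2 \<le> 2^m" using p by (simp add: divide_less_eq)
    have "real m + 1 \<le> 2 * real m" using elim(2) by simp
    hence "(real m + 1)^2 \<le> (2 * real m)^2" by (rule power_mono) simp
    hence "(real m + 1)^2 \<le> 4 * (real m)^2" by (simp add: power_mult_distrib)
    hence "\<bar>c\<bar> * (real m + 1)^2 \<le> \<bar>c\<bar> * (4 * (real m)^2)" by (rule mult_left_mono) simp
    moreover have "c * (real m + 1) ^ 2 \<le> \<bar>c\<bar> * (real m + 1)^2"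
      by (rule mult_right_mono) auto
    ultimately have "c * (real m + 1) ^ 2 \<le> \<bar>c\<bar> * (4 * (real m)^2)" by linarith
    thus ?case using a by simp
  qed
qed

lemma PP_bound:
  fixes G :: "('v,'e) pre_digraph"
  assumes "fin_digraph G" and ge1: "card (arcs G) \<ge> 1"
  shows "finite (PP G m) \<and> card (PP G m) \<le> card (verts G) * card (verts G) * (m+1) * ((m+1) * card (arcs G) ^ m)"
proof -
  interpret fin_digraph G by fact
  define L where "L = {xs. set xs \<subseteq> arcs G \<and> length xs \<le> m}"
  define T where "T = verts G \<times> verts G \<times> {..m} \<times> L"
  define f where "f = (\<lambda>((u::'v,p::'e list),(v::'v,q::'e list)). (u, v, length p, p @ q))"
  have finL: "finite L" unfolding L_def by (rule finite_lists_length_le) simp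
  have cardL: "card L \<le> (m+1) * card (arcs G) ^ m"
  proof -
    have "card L = (\<Sum>i\<le>m. card (arcs G)^i)" unfolding L_def by (rule card_lists_length_le) simp
    also have "\<dots> \<le> (\<Sum>i\<le>m. card (arcs G)^m)"
      by (rule sum_mono) (use ge1 in \<open>auto intro: power_increasing\<close>)
    also have "\<dots> = (m+1) * card (arcs G) ^ m" by simp
    finally show ?thesis .
  qed
  have finT: "finite T" unfolding T_def using finL by auto
  have sub: "f ` PP G m \<subseteq> T"
  proof
    fix z assume "z \<in> f ` PP G m"
    then obtain u p v q where z: "z = f ((u,p),(v,q))" and pp: "((u,p),(v,q)) \<in> PP G m" by auto
    from pp obtain w1 w2 where a1: "awalk u p w1" and a2: "awalk v q w2"
      and len: "length p + length q \<le> m"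
      unfolding PP_def is_path_def by auto
    show "z \<in> T" using a1 a2 len unfolding z f_def T_def L_def awalk_def by auto
  qed
  have inj: "inj_on f (PP G m)"
    unfolding inj_on_def f_def
    by (auto simp: append_eq_append_conv)
  have finPP: "finite (PP G m)"
    using finite_imageD[OF finite_subset[OF sub finT] inj] .
  have "card (PP G m) \<le> card T" using card_inj_on_le[OF inj sub finT] .
  also have "card T = card (verts G) * card (verts G) * (m+1) * card L"
    unfolding T_def by (simp add: card_cartesian_product algebra_simps)
  also have "\<dots> \<le> card (verts G) * card (verts G) * (m+1) * ((m+1) * card (arcs G) ^ m)"
    using cardL by simp
  finally show ?thesis using finPP by simp
qed

lemma grdim_le:
  fixes G :: "('v,'e) pre_digraph"
  assumes "fin_digraph G" "card (arcs G) \<ge> 1"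
  shows "grdim G K m \<le> card (PP G m)"
proof -
  have fin: "finite (PP G m)" using PP_bound[OF assms] by simp
  define C where "C = {card S | S. S \<subseteq> PP G m \<and>
      indep_mod G K S (if m = 0 then {} else PP G (m - 1))}"
  have "0 \<in> C" unfolding C_def indep_mod_def by (intro CollectI exI[of _ "{}"]) auto
  moreover have "C \<subseteq> {..card (PP G m)}" unfolding C_def using card_mono[OF fin] by auto
  ultimately have "Max C \<le> card (PP G m)"
  proof -
    assume a: "0 \<in> C" "C \<subseteq> {..card (PP G m)}"
    have "finite C" using a(2) finite_subset by blast
    hence "Max C \<in> C" using a(1) Max_in by blast
    thus ?thesis using a(2) by auto
  qed
  thus ?thesis unfolding grdim_def C_def .
qed

theorem corollary4p6:
  fixes G :: "('v,'e) pre_digraph"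
  assumes "fin_digraph G"
    and "card (arcs G) = n" and "n \<ge> 1"
  shows "h_alg G TYPE('k::field) \<le> ereal (ln (2 * real n))"
proof -
  define c where "c = real (card (verts G) * card (verts G))"
  have ev: "eventually (\<lambda>m::nat. c * (real m + 1) ^ 2 \<le> 2 ^ m) at_top"
    by (rule ev_pow2)
  have n0: "real n \<ge> 1" using assms by simp
  have ge1: "card (arcs G) \<ge> 1" using assms by simp
  have "eventually (\<lambda>m. (if grdim G TYPE('k) m = 0 then -\<infinity>
       else ereal (ln (real (grdim G TYPE('k) m)) / real m)) \<le> ereal (ln (2 * real n))) sequentially"
    using ev eventually_gt_at_top[of 0]
  proof eventually_elim
    case (elim m)
    show ?case
    proof (cases "grdim G TYPE('k) m = 0")
      case False
      have "real (grdim G TYPE('k) m) \<le> real (card (PP G m))"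
        using grdim_le[OF assms(1) ge1] by simp
      also have "\<dots> \<le> c * (real m + 1) ^ 2 * real n ^ m"
      proof -
        have "card (PP G m) \<le> card (verts G) * card (verts G) * (m+1) * ((m+1) * n ^ m)"
          using PP_bound[OF assms(1) ge1, of m] assms(2) by simp
        hence "real (card (PP G m)) \<le> real (card (verts G) * card (verts G) * (m+1) * ((m+1) * n ^ m))"
          by (rule of_nat_mono)
        thus ?thesis unfolding c_def by (simp add: power2_eq_square algebra_simps)
      qed
      also have "\<dots> \<le> 2 ^ m * real n ^ m"
        using elim(1) n0 by (intro mult_right_mono) auto
      also have "\<dots> = (2 * real n) ^ m" by (simp add: power_mult_distrib)
      finally have le: "real (grdim G TYPE('k) m) \<le> (2 * real n) ^ m" .
      have "ln (real (grdim G TYPE('k) m)) \<le> ln ((2 * real n) ^ m)"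
        using le False by simp
      also have "\<dots> = real m * ln (2 * real n)" using n0 by (subst ln_realpow) auto
      finally have "ln (real (grdim G TYPE('k) m)) / real m \<le> ln (2 * real n)"
        using elim(2) by (simp add: divide_le_eq mult.commute)
      thus ?thesis using False by simp
    qed simp
  qed
  hence "limsup (\<lambda>m. (if grdim G TYPE('k) m = 0 then -\<infinity>
       else ereal (ln (real (grdim G TYPE('k) m)) / real m))) \<le> ereal (ln (2 * real n))"
    by (rule Limsup_bounded)
  moreover have "0 \<le> ln (2 * real n)" using n0 by simp
  ultimately show ?thesis unfolding h_alg_def by auto
qed

end
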